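(* There is a universal constant $c>0$ such that: for any even integer $n\ge2$, any integer $k>1$, and any reals $G,\lambda>0$ with $G\ge 4\lambda$, there exist functions $f_1,\dots,f_n$ on $\mathbb{R}$ and an initialization $x_0$ satisfying Assumption (A) with parameters $n,\lambda,G$, such that for every step size $0<\eta\le\frac{1}{100\lambda n^2}$, SGD with random reshuffling satisfies \[ \mathbb{E}\Big[F(x_k)-\inf_xF(x)\Big]\;\ge\;c\cdot\min\left\{\lambda,\ \frac{G^2}{\lambda(nk)^2}\right\}. \]
   Context: Assumption (A) (parameters $n\ge 2$, $\lambda>0$, $G>0$, on $\mathbb{R}^d$): $F(x)=\frac1n\sum_{i=1}^n f_i(x)$, where each $f_i:\mathbb{R}^d\to\mathbb{R}$ is a convex quadratic function $f_i(x)=x^\top A_ix+b_i^\top x$ (with $A_i$ symmetric positive semidefinite); $F$ is $\lambda$-strongly convex with unique minimizer $x^*$; each $\nabla f_i$ is $L$-Lipschitz for some $L\le 3\lambda$; each $f_i$ satisfies $\|\nabla f_i(x)\|\le G$ for all $x$ with $\|x-x^*\|\le 1$; and the initialization satisfies $\|x_0-x^*\|\le 1$. SGD with random reshuffling with constant step size $\eta$: for each of $k$ epochs, a fresh uniformly random permutation $\pi$ of $\{1,\dots,n\}$ (independent across epochs) is drawn and the updates $x\leftarrow x-\eta\nabla f_{\pi(j)}(x)$, $j=1,\dots,n$, are performed; $x_t$ is the iterate at the end of epoch $t$. *)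

theory Defs
  imports "HOL-Probability.Probability"
begin

text \<open>Setting: d = 1 (functions on the reals). Components are indexed by {0..<n}.\<close>

definition avg_fun :: "nat \<Rightarrow> (nat \<Rightarrow> real \<Rightarrow> real) \<Rightarrow> real \<Rightarrow> real" where
  "avg_fun n f x = (\<Sum>i<n. f i x) / real n"

definition convex_quadratic :: "(real \<Rightarrow> real) \<Rightarrow> bool" where
  "convex_quadratic g \<longleftrightarrow> (\<exists>a b. a \<ge> 0 \<and> g = (\<lambda>x. a * x\<^sup>2 + b * x))"

definition strongly_convex_on_reals :: "real \<Rightarrow> (real \<Rightarrow> real) \<Rightarrow> bool" where
  "strongly_convex_on_reals lam F \<longleftrightarrow>
     (\<forall>x y t. 0 \<le> t \<and> t \<le> 1 \<longrightarrow>
        F (t * x + (1 - t) * y) \<le> t * F x + (1 - t) * F y - lam / 2 * t * (1 - t) * (x - y)\<^sup>2)"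

definition unique_minimizer :: "(real \<Rightarrow> real) \<Rightarrow> real \<Rightarrow> bool" where
  "unique_minimizer F xs \<longleftrightarrow> (\<forall>y. F xs \<le> F y) \<and> (\<forall>y. (\<forall>z. F y \<le> F z) \<longrightarrow> y = xs)"

definition assumption_A ::
  "nat \<Rightarrow> real \<Rightarrow> real \<Rightarrow> (nat \<Rightarrow> real \<Rightarrow> real) \<Rightarrow> real \<Rightarrow> bool" where
  "assumption_A n lam G f x0 \<longleftrightarrow>
     (\<forall>i<n. convex_quadratic (f i)) \<and>
     strongly_convex_on_reals lam (avg_fun n f) \<and>
     (\<exists>L \<le> 3 * lam. \<forall>i<n. L-lipschitz_on UNIV (deriv (f i))) \<and>
     (\<exists>xs. unique_minimizer (avg_fun n f) xs \<and>
        (\<forall>i<n. \<forall>x. \<bar>x - xs\<bar> \<le> 1 \<longrightarrow> \<bar>deriv (f i) x\<bar> \<le> G) \<and>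
        \<bar>x0 - xs\<bar> \<le> 1)"

definition sgd_epoch :: "nat \<Rightarrow> (nat \<Rightarrow> real \<Rightarrow> real) \<Rightarrow> real \<Rightarrow> (nat \<Rightarrow> nat) \<Rightarrow> real \<Rightarrow> real" where
  "sgd_epoch n f eta \<sigma> x = foldl (\<lambda>y j. y - eta * deriv (f (\<sigma> j)) y) x [0..<n]"

text \<open>Iterate after t epochs, with ps t the permutation used in epoch t+1.\<close>
fun sgd_rr :: "nat \<Rightarrow> (nat \<Rightarrow> real \<Rightarrow> real) \<Rightarrow> real \<Rightarrow> (nat \<Rightarrow> nat \<Rightarrow> nat) \<Rightarrow> real \<Rightarrow> nat \<Rightarrow> real" where
  "sgd_rr n f eta ps x0 0 = x0"
| "sgd_rr n f eta ps x0 (Suc t) = sgd_epoch n f eta (ps t) (sgd_rr n f eta ps x0 t)"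

definition perm_seq_pmf :: "nat \<Rightarrow> nat \<Rightarrow> (nat \<Rightarrow> nat \<Rightarrow> nat) pmf" where
  "perm_seq_pmf n k = pmf_of_set (PiE {..<k} (\<lambda>_. {\<sigma>. \<sigma> permutes {..<n}}))"

end

theory Submission imports Defs begin


definition fE :: "nat \<Rightarrow> real \<Rightarrow> real \<Rightarrow> nat \<Rightarrow> real \<Rightarrow> real" where
  "fE m lam G i = (if i < m then (\<lambda>x. G/2 * x) else (\<lambda>x. lam * x^2))"

lemma deriv_fE: "deriv (fE m lam G i) = (\<lambda>x. if i < m then G/2 else 2*lam*x)"
proof
  fix x
  show "deriv (fE m lam G i) x = (if i < m then G/2 else 2*lam*x)"
  proof (cases "i < m")
    case True
    have "((\<lambda>x. G/2 * x) has_real_derivative G/2) (at x)"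
      by (auto intro!: derivative_eq_intros)
    then show ?thesis using True by (simp add: fE_def DERIV_imp_deriv)
  next
    case False
    have "((\<lambda>x. lam * x^2) has_real_derivative 2*lam*x) (at x)"
      by (auto intro!: derivative_eq_intros)
    then show ?thesis using False by (simp add: fE_def DERIV_imp_deriv)
  qed
qed

definition rv :: "nat \<Rightarrow> (nat \<Rightarrow> nat) \<Rightarrow> nat \<Rightarrow> nat" where
  "rv n \<sigma> = (\<lambda>j. if j < n then \<sigma> (n - 1 - j) else j)"

lemma rv_permutes:
  assumes "\<sigma> permutes {..<n}" shows "rv n \<sigma> permutes {..<n}"
proof (rule bij_imp_permutes)
  have b1: "bij_betw (\<lambda>j. n - 1 - j) {..<n} {..<n}"
    by (rule bij_betw_byWitness[where f'="\<lambda>j. n - 1 - j"]) auto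
  have b2: "bij_betw \<sigma> {..<n} {..<n}" using assms by (rule permutes_imp_bij)
  have "bij_betw (\<sigma> \<circ> (\<lambda>j. n - 1 - j)) {..<n} {..<n}"
    using b1 b2 by (rule bij_betw_trans)
  then show "bij_betw (rv n \<sigma>) {..<n} {..<n}"
    by (rule bij_betw_cong[THEN iffD1, rotated]) (auto simp: rv_def)
  show "\<And>x. x \<notin> {..<n} \<Longrightarrow> rv n \<sigma> x = x" by (auto simp: rv_def)
qed

lemma rv_rv:
  assumes "\<sigma> permutes {..<n}" shows "rv n (rv n \<sigma>) = \<sigma>"
proof
  fix j show "rv n (rv n \<sigma>) j = \<sigma> j"
    using permutes_not_in[OF assms, of j] by (auto simp: rv_def)
qed

lemma rv_ws: "map (\<lambda>j. rv n \<sigma> j < m) [0..<n] = rev (map (\<lambda>j. \<sigma> j < m) [0..<n])"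
  by (rule nth_equalityI) (auto simp: rv_def rev_nth)

lemma card_perm_filter:
  assumes "\<sigma> permutes {..<n}"
  shows "card {j. j < n \<and> P (\<sigma> j)} = card {i. i < n \<and> P i}"
proof -
  have inj: "inj_on \<sigma> {j. j < n \<and> P (\<sigma> j)}"
    using permutes_inj[OF assms] by (auto intro: inj_on_subset)
  have "\<sigma> ` {j. j < n \<and> P (\<sigma> j)} = {i. i < n \<and> P i}"
  proof
    show "\<sigma> ` {j. j < n \<and> P (\<sigma> j)} \<subseteq> {i. i < n \<and> P i}"
      using permutes_in_image[OF assms] by auto
    show "{i. i < n \<and> P i} \<subseteq> \<sigma> ` {j. j < n \<and> P (\<sigma> j)}"
    proof
      fix i assume i: "i \<in> {i. i < n \<and> P i}"
      then have "i \<in> \<sigma> ` {..<n}" using permutes_image[OF assms] by auto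
      then obtain j where "j < n" "\<sigma> j = i" by auto
      then show "i \<in> \<sigma> ` {j. j < n \<and> P (\<sigma> j)}" using i by auto
    qed
  qed
  then show ?thesis using card_image[OF inj] by simp
qed

lemma count_L:
  assumes "\<sigma> permutes {..<n}" "m \<le> n"
  shows "length (filter (\<lambda>b. b) (map (\<lambda>j. \<sigma> j < m) [0..<n])) = m"
proof -
  have "length (filter (\<lambda>b. b) (map (\<lambda>j. \<sigma> j < m) [0..<n])) = card {j. j < n \<and> \<sigma> j < m}"
    unfolding length_filter_conv_card by (intro arg_cong[where f=card]) auto
  also have "\<dots> = card {i. i < n \<and> i < m}" by (rule card_perm_filter[OF assms(1)])
  also have "{i. i < n \<and> i < m} = {..<m}" using assms(2) by auto
  finally show ?thesis by simp
qed

lemma count_R: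
  assumes "\<sigma> permutes {..<n}" "m \<le> n"
  shows "length (filter Not (map (\<lambda>j. \<sigma> j < m) [0..<n])) = n - m"
proof -
  have "length (filter Not (map (\<lambda>j. \<sigma> j < m) [0..<n])) = card {j. j < n \<and> \<not> \<sigma> j < m}"
    unfolding length_filter_conv_card by (intro arg_cong[where f=card]) auto
  also have "\<dots> = card {i. i < n \<and> \<not> i < m}" by (rule card_perm_filter[OF assms(1)])
  also have "{i. i < n \<and> \<not> i < m} = {m..<n}" using assms(2) by auto
  finally show ?thesis by simp
qed

fun Fp :: "real \<Rightarrow> bool list \<Rightarrow> real" where
  "Fp q [] = 0"
| "Fp q (b # ws) = Fp q ws + (if b then q ^ length (filter Not ws) else 0)"

definition run :: "real \<Rightarrow> real \<Rightarrow> bool list \<Rightarrow> real \<Rightarrow> real" where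
  "run q g ws y = foldl (\<lambda>y b. if b then y - g else q * y) y ws"

lemma run_closed: "run q g ws y = q ^ length (filter Not ws) * y - g * Fp q ws"
proof (induction ws arbitrary: y)
  case Nil then show ?case by (simp add: run_def)
next
  case (Cons b ws)
  have "run q g (b # ws) y = run q g ws (if b then y - g else q * y)" by (simp add: run_def)
  also have "\<dots> = q ^ length (filter Not ws) * (if b then y - g else q * y) - g * Fp q ws"
    by (rule Cons.IH)
  finally show ?case by (cases b) (auto simp: algebra_simps)
qed

lemma Fp_snoc_T: "Fp q (ws @ [True]) = Fp q ws + 1"
  by (induction ws) auto
lemma Fp_snoc_F: "Fp q (ws @ [False]) = q * Fp q ws"
  by (induction ws) (auto simp: algebra_simps)

lemma Fp_lower: "0 \<le> q \<Longrightarrow> q \<le> 1 \<Longrightarrow>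
   real (length (filter (\<lambda>b. b) ws)) * q ^ length (filter Not ws) \<le> Fp q ws"
proof (induction ws)
  case Nil then show ?case by simp
next
  case (Cons b ws)
  have "q ^ Suc (length (filter Not ws)) \<le> q ^ length (filter Not ws)"
    using Cons.prems by (simp add: mult_left_le_one_le)
  then have "real (length (filter (\<lambda>b. b) ws)) * q ^ Suc (length (filter Not ws)) \<le> real (length (filter (\<lambda>b. b) ws)) * q ^ length (filter Not ws)"
    by (simp add: mult_left_mono)
  then show ?case using Cons by (auto simp: algebra_simps)
qed

lemma Fp_pair: "0 \<le> q \<Longrightarrow> q \<le> 1 \<Longrightarrow>
  Fp q ws + Fp q (rev ws) \<le> real (length (filter (\<lambda>b. b) ws)) * (1 + q ^ length (filter Not ws))"
proof (induction ws)
  case Nil then show ?case by simp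
next
  case (Cons b ws)
  have lr: "real (length (filter (\<lambda>b. b) ws)) * q ^ length (filter Not ws) \<le> Fp q (rev ws)"
    using Fp_lower[OF Cons.prems, of "rev ws"] by (simp add: rev_filter[symmetric])
  show ?case
  proof (cases b)
    case True
    then show ?thesis using Cons by (simp add: Fp_snoc_T algebra_simps)
  next
    case False
    have "Fp q ws + q * Fp q (rev ws) = (Fp q ws + Fp q (rev ws)) - (1 - q) * Fp q (rev ws)"
      by (simp add: algebra_simps)
    also have "\<dots> \<le> real (length (filter (\<lambda>b. b) ws)) * (1 + q ^ length (filter Not ws)) - (1 - q) * (real (length (filter (\<lambda>b. b) ws)) * q ^ length (filter Not ws))"
      using Cons lr by (intro diff_mono mult_left_mono) auto
    finally show ?thesis using False by (simp add: Fp_snoc_F algebra_simps)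
  qed
qed
lemma epoch_fE:
  "sgd_epoch n (fE m lam G) eta \<sigma> x = run (1 - 2*eta*lam) (eta*G/2) (map (\<lambda>j. \<sigma> j < m) [0..<n]) x"
proof -
  have e: "(\<lambda>y j. y - eta * deriv (fE m lam G (\<sigma> j)) y) =
           (\<lambda>y j. if \<sigma> j < m then y - eta*G/2 else (1 - 2*eta*lam) * y)"
    by (auto simp: fun_eq_iff deriv_fE algebra_simps)
  show ?thesis unfolding sgd_epoch_def run_def foldl_map e ..
qed

lemma rr_closed:
  assumes "\<forall>s<t. ps s permutes {..<n}"
    and E: "\<And>\<sigma> x. \<sigma> permutes {..<n} \<Longrightarrow> sgd_epoch n f eta \<sigma> x = Q*x + cc \<sigma>"
  shows "sgd_rr n f eta ps x0 t = Q^t * x0 + (\<Sum>s<t. Q^(t - Suc s) * cc (ps s))"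
  using assms(1)
proof (induction t)
  case 0 then show ?case by simp
next
  case (Suc t)
  have "sgd_rr n f eta ps x0 (Suc t) = Q * sgd_rr n f eta ps x0 t + cc (ps t)"
    using E Suc.prems by simp
  also have "\<dots> = Q * (Q^t * x0 + (\<Sum>s<t. Q^(t - Suc s) * cc (ps s))) + cc (ps t)"
    using Suc by simp
  also have "\<dots> = Q^Suc t * x0 + (\<Sum>s<t. Q * (Q^(t - Suc s) * cc (ps s))) + cc (ps t)"
    by (simp add: sum_distrib_left algebra_simps)
  also have "(\<Sum>s<t. Q * (Q^(t - Suc s) * cc (ps s))) = (\<Sum>s<t. Q^(Suc t - Suc s) * cc (ps s))"
  proof (rule sum.cong)
    fix s assume "s \<in> {..<t}"
    then have "Suc t - Suc s = Suc (t - Suc s)" by auto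
    then show "Q * (Q^(t - Suc s) * cc (ps s)) = Q^(Suc t - Suc s) * cc (ps s)" by simp
  qed simp
  finally show ?case by simp
qed

lemma pow_up: "0 \<le> e \<Longrightarrow> e \<le> 1 \<Longrightarrow> (1-e)^m \<le> 1 - real m*e + real m*(real m - 1)/2*e^2"
proof (induction m)
  case 0 then show ?case by simp
next
  case (Suc m)
  have "(1-e)^Suc m = (1-e)*(1-e)^m" by simp
  also have "\<dots> \<le> (1-e)*(1 - real m*e + real m*(real m - 1)/2*e^2)"
    using Suc by (intro mult_left_mono) auto
  also have "\<dots> \<le> 1 - real (Suc m)*e + real (Suc m)*(real (Suc m) - 1)/2*e^2"
  proof -
    have "0 \<le> real m*(real m - 1)/2*e^3"
      using Suc.prems by (cases m) auto
    moreover have "(1-e)*(1 - real m*e + real m*(real m - 1)/2*e^2) = 1 - real (Suc m)*e + real (Suc m)*(real (Suc m) - 1)/2*e^2 - real m*(real m - 1)/2*e^3"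
      by (simp add: field_simps power2_eq_square power3_eq_cube)
    ultimately show ?thesis by linarith
  qed
  finally show ?case .
qed

lemma arith_d:
  fixes e m Q :: real
  assumes "0 < e" "1 \<le> m" "m*(m-1)*e \<le> 1" "Q \<le> 1 - m*e + m*(m-1)/2*e^2" "1 - m*e \<le> Q"
  shows "e*(1-Q)/2 \<le> 2*(1-Q) - e*m*(1+Q)"
proof -
  have "2*(1-Q) - e*m*(1+Q) = 2 - e*m - Q*(2 + e*m)" by (simp add: algebra_simps)
  also have "\<dots> \<ge> 2 - e*m - (1 - m*e + m*(m-1)/2*e^2)*(2 + e*m)"
    using assms by (intro diff_mono mult_right_mono) auto
  finally have 1: "2 - e*m - (1 - m*e + m*(m-1)/2*e^2)*(2 + e*m) \<le> 2*(1-Q) - e*m*(1+Q)" .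
  have 2: "2 - e*m - (1 - m*e + m*(m-1)/2*e^2)*(2 + e*m) = m*e^2*(1 - m*(m-1)*e/2)"
    by (simp add: field_simps power2_eq_square)
  have "m*e^2*(1/2) \<le> m*e^2*(1 - m*(m-1)*e/2)"
    using assms by (intro mult_left_mono) auto
  moreover have "e*(1-Q)/2 \<le> m*e^2*(1/2)"
  proof -
    have "e*(1-Q) \<le> e*(m*e)" using assms by (intro mult_left_mono) auto
    then show ?thesis by (simp add: power2_eq_square algebra_simps)
  qed
  ultimately show ?thesis using 1 2 by linarith
qed

lemma avg_fE:
  assumes "n = 2*m" "1 \<le> m"
  shows "avg_fun n (fE m lam G) x = lam/2*x^2 + G/4*x"
proof -
  have "(\<Sum>i<n. fE m lam G i x) = (\<Sum>i<n. if i < m then G/2*x else lam*x^2)"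
    by (intro sum.cong) (auto simp: fE_def)
  also have "\<dots> = (\<Sum>i\<in>{..<n} \<inter> {i. i < m}. G/2*x) + (\<Sum>i\<in>{..<n} \<inter> - {i. i < m}. lam*x^2)"
    by (rule sum.If_cases) simp
  also have "{..<n} \<inter> {i. i < m} = {..<m}" using assms by auto
  also have "{..<n} \<inter> - {i. i < m} = {m..<n}" using assms by auto
  finally have "(\<Sum>i<n. fE m lam G i x) = real m * (G/2*x) + real m * (lam*x^2)"
    using assms by simp
  then show ?thesis using assms unfolding avg_fun_def by (simp add: field_simps)
qed

lemma final_arith:
  fixes lam G eta m k e Qk T d :: real
  assumes "0 < lam" "0 < G" "0 < eta" "1 \<le> m" "1 \<le> k" "e = 2*eta*lam" "0 \<le> Qk" "Qk \<le> 1"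
    "1 - m*k*e \<le> Qk" "eta*G/8 \<le> d" "T = Qk + (1-Qk)*d"
  shows "1/2048 * min lam (G^2/(lam*(2*m*k)^2)) \<le> lam/2*T^2"
proof -
  have "0 < eta*G" using assms by simp
  then have d0: "0 \<le> d" using assms by linarith
  show ?thesis
proof (cases "1/2 \<le> Qk")
  case True
  have "0 \<le> (1-Qk)*d" using assms using d0 by (intro mult_nonneg_nonneg) auto
  then have "1/2 \<le> T" using True assms by linarith
  then have "(1/2)^2 \<le> T^2" by (intro power_mono) auto
  then have "lam/2*(1/2)^2 \<le> lam/2*T^2" using assms by (intro mult_left_mono) auto
  then have A: "lam/8 \<le> lam/2*T^2" by (simp add: power2_eq_square)
  have B: "min lam (G^2/(lam*(2*m*k)^2)) \<le> lam" by simp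
  show ?thesis using A B assms(1) by linarith
next
  case False
  then have mke: "1/2 < m*k*e" using assms by linarith
  have mk0: "0 < m*k" using assms by simp
  define z where "z = G/(64*lam*m*k)"
  have z0: "0 \<le> z" using assms by (simp add: z_def)
  have "eta*(4*lam*m*k) > 1" using mke assms by (simp add: algebra_simps)
  then have "eta > 1/(4*lam*m*k)" using assms mk0 by (simp add: field_simps)
  then have "G/8 * eta \<ge> G/8 * (1/(4*lam*m*k))" using assms by (intro mult_left_mono) auto
  moreover have "G/8*(1/(4*lam*m*k)) = 2*z" by (simp add: z_def field_simps)
  moreover have "G/8*eta = eta*G/8" by simp
  ultimately have dz: "d \<ge> 2*z" using assms by linarith
  have "(1-Qk)*d \<ge> (1/2)*d" using False assms z0 dz by (intro mult_right_mono) auto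
  then have Tz: "z \<le> T" using assms z0 dz by linarith
  have "z^2 \<le> T^2" using Tz z0 by (intro power_mono) auto
  then have "lam/2*z^2 \<le> lam/2*T^2" using assms by (intro mult_left_mono) auto
  moreover have "lam/2*z^2 = 1/2048 * (G^2/(lam*(2*m*k)^2))"
    using assms by (simp add: z_def field_simps power2_eq_square)
  moreover have "1/2048 * min lam (G^2/(lam*(2*m*k)^2)) \<le> 1/2048 * (G^2/(lam*(2*m*k)^2))" by simp
  ultimately show ?thesis by linarith
qed
qed

lemma main_bound:
  fixes n m k :: nat and lam G eta :: real
  assumes nm: "n = 2*m" and m1: "1 \<le> m" and k1: "1 < k" and lam: "0 < lam" and G0: "0 < G"
    and eta0: "0 < eta" and etab: "eta \<le> 1/(100*lam*real n^2)"
  shows "1/2048 * min lam (G^2/(lam*(real n*real k)^2)) \<le>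
    measure_pmf.expectation (perm_seq_pmf n k)
      (\<lambda>ps. avg_fun n (fE m lam G) (sgd_rr n (fE m lam G) eta ps (-G/(4*lam)+1) k)
             - (INF x. avg_fun n (fE m lam G) x))"
proof -
  define f where "f = fE m lam G"
  define xs where "xs = -G/(4*lam)"
  define e where "e = 2*eta*lam"
  define q where "q = 1 - e"
  define Q where "Q = q^m"
  define cc where "cc = (\<lambda>\<sigma>::nat\<Rightarrow>nat. -(eta*G/2) * Fp q (map (\<lambda>j. \<sigma> j < m) [0..<n]))"
  define C where "C = -(eta*G/2)*real m*(1+Q)/2"
  have rn: "real n = 2 * real m" using nm by simp
  have mn: "m \<le> n" "n - m = m" using nm by auto
  have e0: "0 < e" using eta0 lam by (simp add: e_def)
  have "eta * (100*lam*real n^2) \<le> 1"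
    using etab lam nm m1 by (simp add: field_simps)
  then have eb: "e * (200 * real m^2) \<le> 1"
    by (simp add: e_def rn power2_eq_square algebra_simps)
  have r1: "1 \<le> real m" using m1 by simp
  have mm: "1 \<le> real m * real m" using mult_mono[OF r1 r1] by simp
  have e1: "e \<le> 1/200"
  proof -
    have "e * 200 \<le> e * (200 * real m^2)" using e0 mm by (simp add: power2_eq_square)
    then show ?thesis using eb by simp
  qed
  have emm: "real m * (real m - 1) * e \<le> 1"
  proof -
    have "real m * (real m - 1) * e \<le> e * (200 * real m^2)"
      using e0 m1 by (simp add: power2_eq_square algebra_simps)
    then show ?thesis using eb by linarith
  qed
  have q0: "0 < q" "q \<le> 1" using e0 e1 by (auto simp: q_def)
  have Qup: "Q \<le> 1 - real m*e + real m*(real m - 1)/2*e^2"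
    unfolding Q_def q_def using pow_up[of e m] e0 e1 by simp
  have Qlo: "1 - real m*e \<le> Q"
    unfolding Q_def q_def using Bernoulli_inequality[of "-e" m] e0 e1 by simp
  have Q0: "0 \<le> Q" using q0 by (simp add: Q_def)
  have Q1: "Q < 1"
  proof -
    obtain m' where mm': "m = Suc m'" using m1 by (cases m) auto
    have "q < 1" using e0 by (simp add: q_def)
    then show ?thesis unfolding Q_def mm' using q0 by (intro power_Suc_less_one) auto
  qed
  have E: "\<And>\<sigma> x. \<sigma> permutes {..<n} \<Longrightarrow> sgd_epoch n f eta \<sigma> x = Q*x + cc \<sigma>"
  proof -
    fix \<sigma> x assume s: "\<sigma> permutes {..<n}"
    have "sgd_epoch n f eta \<sigma> x = run q (eta*G/2) (map (\<lambda>j. \<sigma> j < m) [0..<n]) x"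
      by (simp add: f_def epoch_fE q_def e_def)
    also have "\<dots> = Q*x + cc \<sigma>"
      unfolding run_closed count_R[OF s mn(1)] mn(2) Q_def cc_def by simp
    finally show "sgd_epoch n f eta \<sigma> x = Q*x + cc \<sigma>" .
  qed
  have pair: "\<And>\<sigma>. \<sigma> permutes {..<n} \<Longrightarrow> 2*C \<le> cc \<sigma> + cc (rv n \<sigma>)"
  proof -
    fix \<sigma> assume s: "\<sigma> permutes {..<n}"
    define ws where "ws = map (\<lambda>j. \<sigma> j < m) [0..<n]"
    have "Fp q ws + Fp q (rev ws) \<le> real m * (1 + Q)"
      using Fp_pair[of q ws] q0 count_L[OF s mn(1)] count_R[OF s mn(1)] mn(2)
      by (simp add: ws_def Q_def)
    moreover have "0 \<le> eta*G/2" using eta0 G0 by simp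
    ultimately have "-(eta*G/2) * (real m * (1 + Q)) \<le> -(eta*G/2) * (Fp q ws + Fp q (rev ws))"
      by (intro mult_left_mono_neg) auto
    then show "2*C \<le> cc \<sigma> + cc (rv n \<sigma>)"
      unfolding cc_def C_def rv_ws ws_def[symmetric] by (simp add: algebra_simps)
  qed
  define P where "P = {\<sigma>::nat\<Rightarrow>nat. \<sigma> permutes {..<n}}"
  define S where "S = PiE {..<k} (\<lambda>_. P)"
  have finS: "finite S" unfolding S_def P_def by (intro finite_PiE finite_permutations) auto
  have neS: "S \<noteq> {}"
  proof -
    have "(\<lambda>t. if t < k then id else undefined) \<in> S"
      unfolding S_def P_def by (auto simp: PiE_iff permutes_id extensional_def)
    then show ?thesis by auto
  qed
  define N where "N = real (card S)"
  have N0: "0 < N" using finS neS by (simp add: N_def card_gt_0_iff)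
  define R where "R = (\<lambda>ps::nat\<Rightarrow>nat\<Rightarrow>nat. \<lambda>t. if t < k then rv n (ps t) else undefined)"
  have RS: "\<And>ps. ps \<in> S \<Longrightarrow> R ps \<in> S"
    unfolding S_def P_def R_def by (auto simp: PiE_iff extensional_def rv_permutes)
  have RR: "\<And>ps. ps \<in> S \<Longrightarrow> R (R ps) = ps"
  proof
    fix ps t assume ps: "ps \<in> S"
    show "R (R ps) t = ps t"
    proof (cases "t < k")
      case True
      then have "ps t permutes {..<n}" using ps by (auto simp: S_def P_def)
      then show ?thesis using True by (simp add: R_def rv_rv)
    next
      case False
      then show ?thesis using ps by (auto simp: R_def S_def PiE_def extensional_def)
    qed
  qed
  define X where "X = (\<lambda>ps. sgd_rr n f eta ps (xs+1) k)"
  define Gs where "Gs = (\<Sum>s<k. Q^(k - Suc s))"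
  have closed: "\<And>ps. ps \<in> S \<Longrightarrow> X ps = Q^k * (xs+1) + (\<Sum>s<k. Q^(k - Suc s) * cc (ps s))"
    unfolding X_def by (rule rr_closed) (auto simp: S_def P_def E)
  have pw: "\<And>ps. ps \<in> S \<Longrightarrow> 2*(Q^k*(xs+1) + C*Gs) \<le> X ps + X (R ps)"
  proof -
    fix ps assume ps: "ps \<in> S"
    have "X (R ps) = Q^k * (xs+1) + (\<Sum>s<k. Q^(k - Suc s) * cc (rv n (ps s)))"
      using closed[OF RS[OF ps]] by (simp add: R_def)
    then have "X ps + X (R ps) = 2*(Q^k*(xs+1)) + (\<Sum>s<k. Q^(k - Suc s) * (cc (ps s) + cc (rv n (ps s))))"
      using closed[OF ps] by (simp add: sum.distrib algebra_simps)
    moreover have "(\<Sum>s<k. Q^(k - Suc s) * (2*C)) \<le> (\<Sum>s<k. Q^(k - Suc s) * (cc (ps s) + cc (rv n (ps s))))"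
    proof (rule sum_mono)
      fix s assume "s \<in> {..<k}"
      then have "ps s permutes {..<n}" using ps by (auto simp: S_def P_def)
      then show "Q^(k - Suc s) * (2*C) \<le> Q^(k - Suc s) * (cc (ps s) + cc (rv n (ps s)))"
        using pair Q0 by (intro mult_left_mono) auto
    qed
    moreover have "(\<Sum>s<k. Q^(k - Suc s) * (2*C)) = 2*(C*Gs)"
      unfolding Gs_def sum_distrib_left by (simp add: algebra_simps)
    ultimately show "2*(Q^k*(xs+1) + C*Gs) \<le> X ps + X (R ps)" by simp
  qed
  define B where "B = Q^k*(xs+1) + C*Gs"
  have sumR: "(\<Sum>ps\<in>S. X (R ps)) = (\<Sum>ps\<in>S. X ps)"
    by (rule sum.reindex_bij_witness[where i=R and j=R]) (auto simp: RS RR)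
  have "2 * (N * B) = (\<Sum>ps\<in>S. 2*B)" by (simp add: N_def)
  also have "\<dots> \<le> (\<Sum>ps\<in>S. X ps + X (R ps))" using pw by (intro sum_mono) (simp add: B_def)
  also have "\<dots> = 2 * (\<Sum>ps\<in>S. X ps)" using sumR by (simp add: sum.distrib)
  finally have sumX: "N * B \<le> (\<Sum>ps\<in>S. X ps)" by simp
  define T where "T = B - xs"
  define Y where "Y = (\<lambda>ps. X ps - xs)"
  have sumY: "N * T \<le> (\<Sum>ps\<in>S. Y ps)"
    using sumX by (simp add: Y_def T_def sum_subtractf N_def algebra_simps)
  have GsE: "(1 - Q) * Gs = 1 - Q^k"
  proof -
    have "Gs = (\<Sum>s<k. Q^s)" unfolding Gs_def by (rule sum.nat_diff_reindex)
    then show ?thesis by (simp add: one_diff_power_eq)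
  qed
  define d where "d = C/(1-Q) - xs"
  have TE: "T = Q^k + (1 - Q^k) * d"
  proof -
    have "Gs = (1 - Q^k)/(1-Q)" using GsE Q1 by (simp add: field_simps)
    then show ?thesis unfolding T_def B_def d_def by (simp add: field_simps)
  qed
  have dlow: "eta*G/8 \<le> d"
  proof -
    have ar: "e*(1-Q)/2 \<le> 2*(1-Q) - e*real m*(1+Q)"
      using arith_d[of e "real m" Q] e0 m1 emm Qup Qlo by simp
    have "d - eta*G/8 = G/(8*lam*(1-Q)) * (2*(1-Q) - e*real m*(1+Q) - e*(1-Q)/2)"
      using Q1 lam unfolding d_def C_def xs_def e_def by (simp add: field_simps)
    moreover have "0 \<le> G/(8*lam*(1-Q)) * (2*(1-Q) - e*real m*(1+Q) - e*(1-Q)/2)"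
      using ar Q1 lam G0 by (intro mult_nonneg_nonneg) auto
    ultimately show ?thesis by linarith
  qed
  have Qk0: "0 \<le> Q^k" "Q^k \<le> 1" using Q0 Q1 by (auto intro: power_le_one)
  have Qklo: "1 - real m * real k * e \<le> Q^k"
  proof -
    have "Q^k = (1 - e)^(m*k)" by (simp add: Q_def q_def power_mult)
    moreover have "1 + real (m*k) * (-e) \<le> (1 + (-e))^(m*k)"
      using e1 by (intro Bernoulli_inequality) auto
    ultimately show ?thesis by simp
  qed
  have fin: "1/2048 * min lam (G^2/(lam*(2*real m*real k)^2)) \<le> lam/2*T^2"
    using final_arith[of lam G eta "real m" "real k" e "Q^k" d T] lam G0 eta0 m1 k1 e_def Qk0 Qklo dlow TE
    by simp
  have T0: "0 \<le> T" using TE Qk0 dlow eta0 G0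
    by (metis add_nonneg_nonneg diff_ge_0_iff_ge mult_nonneg_nonneg order_trans divide_nonneg_pos
        mult_pos_pos zero_less_numeral less_imp_le)
  have "(N*T)^2 \<le> (\<Sum>ps\<in>S. Y ps)^2"
    using sumY T0 N0 by (intro power_mono) auto
  also have "\<dots> \<le> (\<Sum>ps\<in>S. (Y ps)^2) * N"
    unfolding N_def by (rule sum_squared_le_sum_of_squares)
  finally have "N * T^2 \<le> (\<Sum>ps\<in>S. (Y ps)^2)"
    using N0 by (simp add: power2_eq_square algebra_simps)
  then have J: "T^2 \<le> (\<Sum>ps\<in>S. (Y ps)^2) / N" using N0 by (simp add: field_simps)
  have Fform: "\<And>x. avg_fun n f x = avg_fun n f xs + lam/2*(x - xs)^2"
    using lam unfolding f_def avg_fE[OF nm m1] xs_def by (simp add: field_simps power2_eq_square)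
  have INF: "(INF x. avg_fun n f x) = avg_fun n f xs"
  proof (rule cInf_eq_minimum)
    show "avg_fun n f xs \<in> range (avg_fun n f)" by simp
    fix y assume "y \<in> range (avg_fun n f)"
    then obtain x where "y = avg_fun n f x" by auto
    moreover have "0 \<le> lam/2*(x - xs)^2" using lam by simp
    ultimately show "avg_fun n f xs \<le> y" using Fform[of x] by linarith
  qed
  have "measure_pmf.expectation (perm_seq_pmf n k) (\<lambda>ps. avg_fun n f (X ps) - (INF x. avg_fun n f x))
      = (\<Sum>ps\<in>S. avg_fun n f (X ps) - (INF x. avg_fun n f x)) / N"
    unfolding perm_seq_pmf_def S_def[symmetric] P_def[symmetric] N_def
    using finS neS by (simp add: integral_pmf_of_set)
  also have "\<dots> = lam/2 * ((\<Sum>ps\<in>S. (Y ps)^2) / N)"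
  proof -
    have h: "\<And>ps. avg_fun n f (X ps) - avg_fun n f xs = lam/2 * (Y ps)^2"
      unfolding Y_def using Fform by (metis add_diff_cancel_left')
    have "(\<Sum>ps\<in>S. avg_fun n f (X ps) - avg_fun n f xs) = (\<Sum>ps\<in>S. lam/2 * (Y ps)^2)"
      by (rule sum.cong[OF refl h])
    also have "\<dots> = lam/2 * (\<Sum>ps\<in>S. (Y ps)^2)" by (rule sum_distrib_left[symmetric])
    finally have E2: "(\<Sum>ps\<in>S. avg_fun n f (X ps) - avg_fun n f xs) = lam/2 * (\<Sum>ps\<in>S. (Y ps)^2)" .
    show ?thesis by (simp only: INF E2 times_divide_eq_right)
  qed
  finally have obj: "measure_pmf.expectation (perm_seq_pmf n k) (\<lambda>ps. avg_fun n f (X ps) - (INF x. avg_fun n f x))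
      = lam/2 * ((\<Sum>ps\<in>S. (Y ps)^2) / N)" .
  have "lam/2*T^2 \<le> lam/2 * ((\<Sum>ps\<in>S. (Y ps)^2) / N)"
    using J lam by (intro mult_left_mono) auto
  then show ?thesis
    using fin obj rn unfolding X_def f_def xs_def by simp
qed

lemma assmA:
  assumes nm: "n = 2*m" and m1: "1 \<le> m" and lam: "0 < lam" and G0: "0 < G" and G4: "4*lam \<le> G"
  shows "assumption_A n lam G (fE m lam G) (-G/(4*lam)+1)"
proof -
  define f where "f = fE m lam G"
  define xs where "xs = -G/(4*lam)"
  have avg: "\<And>x. avg_fun n f x = lam/2*x^2 + G/4*x" unfolding f_def by (rule avg_fE[OF nm m1])
  have Fform: "\<And>x. avg_fun n f x = avg_fun n f xs + lam/2*(x - xs)^2"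
    using lam unfolding avg xs_def by (simp add: field_simps power2_eq_square)
  have c1: "\<forall>i<n. convex_quadratic (f i)"
  proof (intro allI impI)
    fix i assume "i < n"
    show "convex_quadratic (f i)"
    proof (cases "i < m")
      case True then show ?thesis unfolding convex_quadratic_def f_def fE_def
        by (intro exI[of _ 0] exI[of _ "G/2"]) auto
    next
      case False then show ?thesis unfolding convex_quadratic_def f_def fE_def
        using lam by (intro exI[of _ lam] exI[of _ 0]) auto
    qed
  qed
  have c2: "strongly_convex_on_reals lam (avg_fun n f)"
    unfolding strongly_convex_on_reals_def avg
  proof (intro allI impI)
    fix x y t :: real
    have "lam / 2 * (t * x + (1 - t) * y)\<^sup>2 + G / 4 * (t * x + (1 - t) * y) =
       t * (lam / 2 * x\<^sup>2 + G / 4 * x) + (1 - t) * (lam / 2 * y\<^sup>2 + G / 4 * y) -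
       lam / 2 * t * (1 - t) * (x - y)\<^sup>2"
      by (simp add: field_simps power2_eq_square)
    then show "lam / 2 * (t * x + (1 - t) * y)\<^sup>2 + G / 4 * (t * x + (1 - t) * y)
       \<le> t * (lam / 2 * x\<^sup>2 + G / 4 * x) + (1 - t) * (lam / 2 * y\<^sup>2 + G / 4 * y) -
          lam / 2 * t * (1 - t) * (x - y)\<^sup>2" by simp
  qed
  have c3: "\<exists>L \<le> 3 * lam. \<forall>i<n. L-lipschitz_on UNIV (deriv (f i))"
  proof (intro exI[of _ "2*lam"] conjI allI impI)
    show "2*lam \<le> 3*lam" using lam by simp
    fix i assume "i < n"
    show "(2*lam)-lipschitz_on UNIV (deriv (f i))"
    proof (rule lipschitz_onI)
      fix x y :: real
      show "dist (deriv (f i) x) (deriv (f i) y) \<le> 2 * lam * dist x y"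
        using lam unfolding f_def deriv_fE dist_real_def
        by (auto simp: abs_mult right_diff_distrib[symmetric])
    next
      show "0 \<le> 2*lam" using lam by simp
    qed
  qed
  have c4: "unique_minimizer (avg_fun n f) xs"
    unfolding unique_minimizer_def
  proof (intro conjI allI impI)
    fix y
    show "avg_fun n f xs \<le> avg_fun n f y" using Fform[of y] lam by simp
  next
    fix y assume h: "\<forall>z. avg_fun n f y \<le> avg_fun n f z"
    then have "avg_fun n f y \<le> avg_fun n f xs" by simp
    then have "lam/2*(y - xs)^2 \<le> 0" using Fform[of y] by linarith
    then have "(y - xs)^2 = 0" using lam
      by (metis divide_pos_pos less_eq_real_def mult_le_0_iff not_less power2_less_0 zero_less_numeral)
    then show "y = xs" by simp
  qed
  have c5: "\<forall>i<n. \<forall>x. \<bar>x - xs\<bar> \<le> 1 \<longrightarrow> \<bar>deriv (f i) x\<bar> \<le> G"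
  proof (intro allI impI)
    fix i x assume "i < n" and hx: "\<bar>x - xs\<bar> \<le> 1"
    show "\<bar>deriv (f i) x\<bar> \<le> G"
    proof (cases "i < m")
      case True then show ?thesis using G0 unfolding f_def deriv_fE by simp
    next
      case False
      have "0 \<le> G/(4*lam)" using G0 lam by simp
      then have "\<bar>x\<bar> \<le> G/(4*lam) + 1" using hx unfolding xs_def by linarith
      then have "2*lam*\<bar>x\<bar> \<le> 2*lam*(G/(4*lam) + 1)" using lam by (intro mult_left_mono) auto
      also have "\<dots> = G/2 + 2*lam" using lam by (simp add: field_simps)
      finally show ?thesis using False G4 lam unfolding f_def deriv_fE by (simp add: abs_mult)
    qed
  qed
  show ?thesis
    unfolding assumption_A_def f_def[symmetric] xs_def[symmetric]
    using c1 c2 c3 c4 c5 by auto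
qed

theorem proposition3:
  "\<exists>c::real. c > 0 \<and>
     (\<forall>(n::nat) (k::nat) (G::real) (lam::real).
        even n \<and> n \<ge> 2 \<and> k > 1 \<and> lam > 0 \<and> G > 0 \<and> G \<ge> 4 * lam \<longrightarrow>
        (\<exists>(f::nat \<Rightarrow> real \<Rightarrow> real) (x0::real).
           assumption_A n lam G f x0 \<and>
           (\<forall>eta::real. 0 < eta \<and> eta \<le> 1 / (100 * lam * real n ^ 2) \<longrightarrow>
              measure_pmf.expectation (perm_seq_pmf n k)
                (\<lambda>ps. avg_fun n f (sgd_rr n f eta ps x0 k) - (INF x. avg_fun n f x))
              \<ge> c * min lam (G\<^sup>2 / (lam * (real n * real k)\<^sup>2)))))"
proof (intro exI[of _ "1/2048"] conjI allI impI)
  show "(0::real) < 1/2048" by simp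
  fix n k :: nat and G lam :: real
  assume H: "even n \<and> 2 \<le> n \<and> 1 < k \<and> 0 < lam \<and> 0 < G \<and> 4 * lam \<le> G"
  define m where "m = n div 2"
  have nm: "n = 2*m" using H by (simp add: m_def)
  have m1: "1 \<le> m" using H nm by linarith
  show "\<exists>f x0. assumption_A n lam G f x0 \<and>
           (\<forall>eta::real. 0 < eta \<and> eta \<le> 1 / (100 * lam * real n ^ 2) \<longrightarrow>
              measure_pmf.expectation (perm_seq_pmf n k)
                (\<lambda>ps. avg_fun n f (sgd_rr n f eta ps x0 k) - (INF x. avg_fun n f x))
              \<ge> 1/2048 * min lam (G\<^sup>2 / (lam * (real n * real k)\<^sup>2)))"
  proof (intro exI[of _ "fE m lam G"] exI[of _ "-G/(4*lam)+1"] conjI allI impI)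
    show "assumption_A n lam G (fE m lam G) (-G/(4*lam)+1)"
      using assmA[OF nm m1] H by auto
    fix eta :: real assume he: "0 < eta \<and> eta \<le> 1 / (100 * lam * real n ^ 2)"
    show "1/2048 * min lam (G\<^sup>2 / (lam * (real n * real k)\<^sup>2)) \<le>
      measure_pmf.expectation (perm_seq_pmf n k)
        (\<lambda>ps. avg_fun n (fE m lam G) (sgd_rr n (fE m lam G) eta ps (-G/(4*lam)+1) k) - (INF x. avg_fun n (fE m lam G) x))"
      using main_bound[OF nm m1] H he by auto
  qed
qed

end
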